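(* Let $C\subseteq V(K_n\times K_m)$ satisfy: (1) there exist $1\le n_1<n_2<n_3\le n$ and $1\le m_1<m_2<m_3\le m$ with $(n_1,m_1),(n_2,m_2),(n_3,m_3)\in C$; (2) every $v\in C$ is row-isolated or column-isolated in $C$; (3) $rs(C)=m$ and $cs(C)=n$; (4) at most one vertex of $C$ is isolated in $C$. Then $C$ is an identifying code of $K_n\times K_m$.
   Context: $K_n\times K_m$ is the direct product of complete graphs: vertex set $[n]\times[m]$, with $(i,r)$ adjacent to $(j,s)$ iff $i\ne j$ and $r \ne s$. An identifying code is a dominating set $C$ with $N[x]\cap C\ne N[y]\cap C$ for all distinct vertices $x,y$ ($N[x]$ the closed neighborhood). Columns: $C_i=\{(i,t):t\in[m]\}$; rows: $R_r=\{(k,r):k\in[n]\}$. $cs(C)$ (resp. $rs(C)$) is the number of columns (resp. rows) meeting $C$. A vertex $v=(i,r)$ is column-isolated in $C$ if $C\cap C_i=\{v\}$, row-isolated in $C$ if $C\cap R_r=\{v\}$, and isolated in $C$ if both. *)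

theory Defs
  imports Main
begin

definition verts :: "nat \<Rightarrow> nat \<Rightarrow> (nat \<times> nat) set" where
  "verts n m = {1..n} \<times> {1..m}"

definition adj :: "nat \<times> nat \<Rightarrow> nat \<times> nat \<Rightarrow> bool" where
  "adj x y \<longleftrightarrow> fst x \<noteq> fst y \<and> snd x \<noteq> snd y"

definition closed_nbhd :: "nat \<Rightarrow> nat \<Rightarrow> nat \<times> nat \<Rightarrow> (nat \<times> nat) set" where
  "closed_nbhd n m x = {y \<in> verts n m. adj x y} \<union> {x}"

definition dominating :: "nat \<Rightarrow> nat \<Rightarrow> (nat \<times> nat) set \<Rightarrow> bool" where
  "dominating n m C \<longleftrightarrow> C \<subseteq> verts n m \<and> (\<forall>x\<in>verts n m. closed_nbhd n m x \<inter> C \<noteq> {})"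

definition identifying_code :: "nat \<Rightarrow> nat \<Rightarrow> (nat \<times> nat) set \<Rightarrow> bool" where
  "identifying_code n m C \<longleftrightarrow> dominating n m C \<and>
     (\<forall>x\<in>verts n m. \<forall>y\<in>verts n m. x \<noteq> y \<longrightarrow> closed_nbhd n m x \<inter> C \<noteq> closed_nbhd n m y \<inter> C)"

definition column :: "nat \<Rightarrow> nat \<Rightarrow> (nat \<times> nat) set" where
  "column m i = {(i, t) | t. t \<in> {1..m}}"

definition row :: "nat \<Rightarrow> nat \<Rightarrow> (nat \<times> nat) set" where
  "row n r = {(k, r) | k. k \<in> {1..n}}"

definition cs :: "nat \<Rightarrow> nat \<Rightarrow> (nat \<times> nat) set \<Rightarrow> nat" where
  "cs n m C = card {i \<in> {1..n}. column m i \<inter> C \<noteq> {}}"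

definition rs :: "nat \<Rightarrow> nat \<Rightarrow> (nat \<times> nat) set \<Rightarrow> nat" where
  "rs n m C = card {r \<in> {1..m}. row n r \<inter> C \<noteq> {}}"

definition col_isolated :: "nat \<Rightarrow> (nat \<times> nat) set \<Rightarrow> nat \<times> nat \<Rightarrow> bool" where
  "col_isolated m C v \<longleftrightarrow> C \<inter> column m (fst v) = {v}"

definition row_isolated :: "nat \<Rightarrow> (nat \<times> nat) set \<Rightarrow> nat \<times> nat \<Rightarrow> bool" where
  "row_isolated n C v \<longleftrightarrow> C \<inter> row n (snd v) = {v}"

definition isolated :: "nat \<Rightarrow> nat \<Rightarrow> (nat \<times> nat) set \<Rightarrow> nat \<times> nat \<Rightarrow> bool" where
  "isolated n m C v \<longleftrightarrow> row_isolated n C v \<and> col_isolated m C v"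

end

theory Submission imports Defs begin
lemma key:
  fixes C :: "(nat\<times>nat) set"
  assumes rows: "\<forall>r\<in>{1..m}. \<exists>k. (k,r)\<in>C" and cols: "\<forall>i\<in>{1..n}. \<exists>t. (i,t)\<in>C"
  and iso: "\<forall>a b. (a,b)\<in>C \<longrightarrow> (\<forall>k. (k,b)\<in>C \<longrightarrow> k=a) \<or> (\<forall>t. (a,t)\<in>C \<longrightarrow> t=b)"
  and uniq: "\<forall>a b c d. (a,b)\<in>C \<longrightarrow> (c,d)\<in>C \<longrightarrow> (\<forall>k.(k,b)\<in>C\<longrightarrow>k=a) \<longrightarrow> (\<forall>t.(a,t)\<in>C\<longrightarrow>t=b) \<longrightarrow> (\<forall>k.(k,d)\<in>C\<longrightarrow>k=c) \<longrightarrow> (\<forall>t.(c,t)\<in>C\<longrightarrow>t=d) \<longrightarrow> (a,b)=(c,d)"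
  and eq: "\<forall>a b. (a,b)\<in>C \<longrightarrow> (((a\<noteq>i \<and> b\<noteq>r) \<or> (a,b)=(i,r)) \<longleftrightarrow> ((a\<noteq>j \<and> b\<noteq>s) \<or> (a,b)=(j,s)))"
  and ij: "i\<in>{1..n}" "j\<in>{1..n}" "r\<in>{1..m}" "s\<in>{1..m}"
  shows "(i,r)=(j,s)"
proof (rule ccontr)
  assume ne: "(i,r)\<noteq>(j,s)"
  obtain k1 where k1: "(k1,r)\<in>C" using rows ij by blast
  obtain k2 where k2: "(k2,s)\<in>C" using rows ij by blast
  obtain t1 where t1: "(i,t1)\<in>C" using cols ij by blast
  obtain t2 where t2: "(j,t2)\<in>C" using cols ij by blast
  show False
  proof (cases "i=j")
    case True
    then show False using eq k1 ne by fastforce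
  next
    case ij2: False
    show False
    proof (cases "r=s")
      case True then show False using eq t1 ij2 by fastforce
    next
      case rs: False
      have c1: "\<And>t. (i,t)\<in>C \<Longrightarrow> t=r \<or> t=s" using eq ij2 rs by fastforce
      have c2: "\<And>t. (j,t)\<in>C \<Longrightarrow> t=r \<or> t=s" using eq ij2 rs by fastforce
      have r1: "\<And>k. (k,r)\<in>C \<Longrightarrow> k=i \<or> k=j" using eq ij2 rs by fastforce
      have r2: "\<And>k. (k,s)\<in>C \<Longrightarrow> k=i \<or> k=j" using eq ij2 rs by fastforce
      show False
      proof (cases "(i,r)\<in>C")
        case xC: True
        show False
        proof (cases "(j,s)\<in>C")
          case yC: True
          have "(i,s)\<notin>C" using iso[rule_format, of i s] xC yC ij2 rs by metis
          moreover have "(j,r)\<notin>C" using iso[rule_format, of j r] xC yC ij2 rs by metis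
          ultimately show False using uniq[rule_format, of i r j s] xC yC c1 c2 r1 r2 ij2 rs ne by metis
        next
          case yN: False
          have "(j,r)\<in>C" using t2 c2 yN by metis
          moreover have "(i,s)\<in>C" using k2 r2 yN by metis
          ultimately show False using iso[rule_format, of i r] xC ij2 rs by metis
        qed
      next
        case xN: False
        show False
        proof (cases "(j,s)\<in>C")
          case yC: True
          have "(i,s)\<in>C" using t1 c1 xN by metis
          moreover have "(j,r)\<in>C" using k1 r1 xN by metis
          ultimately show False using iso[rule_format, of j s] yC ij2 rs by metis
        next
          case yN: False
          have a: "(i,s)\<in>C" using t1 c1 xN by metis
          have b: "(j,r)\<in>C" using t2 c2 yN by metis
          have "(i,s)=(j,r)" apply (rule uniq[rule_format, OF a b]) using a b c1 c2 r1 r2 xN yN ij2 by blast+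
          then show False using ij2 by simp
        qed
      qed
    qed
  qed
qed

theorem mainTheorem12:
  fixes n m :: nat and C :: "(nat \<times> nat) set"
  assumes sub: "C \<subseteq> verts n m"
    and h1: "\<exists>n1 n2 n3 m1 m2 m3. 1 \<le> n1 \<and> n1 < n2 \<and> n2 < n3 \<and> n3 \<le> n \<and>
               1 \<le> m1 \<and> m1 < m2 \<and> m2 < m3 \<and> m3 \<le> m \<and>
               (n1, m1) \<in> C \<and> (n2, m2) \<in> C \<and> (n3, m3) \<in> C"
    and h2: "\<forall>v\<in>C. row_isolated n C v \<or> col_isolated m C v"
    and h3: "rs n m C = m" "cs n m C = n"
    and h4: "card {v \<in> C. isolated n m C v} \<le> 1"
  shows "identifying_code n m C"
proof -
  have fin: "finite C" using sub finite_subset unfolding verts_def by blast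
  have inV: "\<And>a b. (a,b)\<in>C \<Longrightarrow> a\<in>{1..n} \<and> b\<in>{1..m}" using sub unfolding verts_def by blast
  have R: "{r \<in> {1..m}. row n r \<inter> C \<noteq> {}} = {1..m}"
    by (rule card_subset_eq) (use h3(1) in \<open>auto simp: rs_def\<close>)
  have rows: "\<forall>r\<in>{1..m}. \<exists>k. (k,r)\<in>C"
  proof
    fix r assume "r\<in>{1..m}"
    then have "row n r \<inter> C \<noteq> {}" using R by blast
    then show "\<exists>k. (k,r)\<in>C" unfolding row_def by blast
  qed
  have Cc: "{i \<in> {1..n}. column m i \<inter> C \<noteq> {}} = {1..n}"
    by (rule card_subset_eq) (use h3(2) in \<open>auto simp: cs_def\<close>)
  have cols: "\<forall>i\<in>{1..n}. \<exists>t. (i,t)\<in>C"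
  proof
    fix i assume "i\<in>{1..n}"
    then have "column m i \<inter> C \<noteq> {}" using Cc by blast
    then show "\<exists>t. (i,t)\<in>C" unfolding column_def by blast
  qed
  have riso: "\<And>a b. (a,b)\<in>C \<Longrightarrow> row_isolated n C (a,b) \<longleftrightarrow> (\<forall>k. (k,b)\<in>C \<longrightarrow> k=a)"
    unfolding row_isolated_def row_def using inV by auto
  have ciso: "\<And>a b. (a,b)\<in>C \<Longrightarrow> col_isolated m C (a,b) \<longleftrightarrow> (\<forall>t. (a,t)\<in>C \<longrightarrow> t=b)"
    unfolding col_isolated_def column_def using inV by auto
  have iso: "\<forall>a b. (a,b)\<in>C \<longrightarrow> (\<forall>k. (k,b)\<in>C \<longrightarrow> k=a) \<or> (\<forall>t. (a,t)\<in>C \<longrightarrow> t=b)"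
    using h2 riso ciso by blast
  have finI: "finite {v \<in> C. isolated n m C v}" using fin by simp
  have one: "\<forall>x\<in>{v \<in> C. isolated n m C v}. \<forall>y\<in>{v \<in> C. isolated n m C v}. x=y"
    using h4 card_le_Suc0_iff_eq[OF finI] by simp
  have uniq: "\<forall>a b c d. (a,b)\<in>C \<longrightarrow> (c,d)\<in>C \<longrightarrow> (\<forall>k.(k,b)\<in>C\<longrightarrow>k=a) \<longrightarrow> (\<forall>t.(a,t)\<in>C\<longrightarrow>t=b) \<longrightarrow> (\<forall>k.(k,d)\<in>C\<longrightarrow>k=c) \<longrightarrow> (\<forall>t.(c,t)\<in>C\<longrightarrow>t=d) \<longrightarrow> (a,b)=(c,d)"
  proof (intro allI impI)
    fix a b c d assume a: "(a,b)\<in>C" and c: "(c,d)\<in>C"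
      and p: "\<forall>k.(k,b)\<in>C\<longrightarrow>k=a" "\<forall>t.(a,t)\<in>C\<longrightarrow>t=b" "\<forall>k.(k,d)\<in>C\<longrightarrow>k=c" "\<forall>t.(c,t)\<in>C\<longrightarrow>t=d"
    have "isolated n m C (a,b)"
      unfolding isolated_def using riso[OF a] ciso[OF a] p(1,2) by blast
    moreover have "isolated n m C (c,d)"
      unfolding isolated_def using riso[OF c] ciso[OF c] p(3,4) by blast
    ultimately have "(a,b) \<in> {v \<in> C. isolated n m C v}" "(c,d) \<in> {v \<in> C. isolated n m C v}" using a c by auto
    then show "(a,b)=(c,d)" using one by blast
  qed
  have nb: "\<And>x z. z\<in>C \<Longrightarrow> z \<in> closed_nbhd n m x \<longleftrightarrow> adj x z \<or> z = x"
    unfolding closed_nbhd_def using sub by auto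
  have dom: "dominating n m C"
    unfolding dominating_def
  proof (intro conjI ballI sub)
    fix x assume "x \<in> verts n m"
    obtain i r where x: "x=(i,r)" by fastforce
    obtain n1 n2 n3 m1 m2 m3 where h: "n1 < n2" "n2 < n3" "m1 < m2" "m2 < m3"
      "(n1, m1) \<in> C" "(n2, m2) \<in> C" "(n3, m3) \<in> C" using h1 by blast
    have "\<exists>z\<in>C. adj x z" unfolding adj_def x
    proof -
      have "(n1\<noteq>i \<and> m1\<noteq>r) \<or> (n2\<noteq>i \<and> m2\<noteq>r) \<or> (n3\<noteq>i \<and> m3\<noteq>r)" using h(1-4) by auto
      then show "\<exists>z\<in>C. fst (i, r) \<noteq> fst z \<and> snd (i, r) \<noteq> snd z" using h(5-7) by force
    qed
    then show "closed_nbhd n m x \<inter> C \<noteq> {}" using nb by blast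
  qed
  show ?thesis unfolding identifying_code_def
  proof (intro conjI dom ballI impI)
    fix x y assume xv: "x \<in> verts n m" and yv: "y \<in> verts n m" and ne: "x \<noteq> y"
    obtain i r where x: "x=(i,r)" by fastforce
    obtain j s where y: "y=(j,s)" by fastforce
    show "closed_nbhd n m x \<inter> C \<noteq> closed_nbhd n m y \<inter> C"
    proof
      assume E: "closed_nbhd n m x \<inter> C = closed_nbhd n m y \<inter> C"
      have eq: "\<forall>a b. (a,b)\<in>C \<longrightarrow> (((a\<noteq>i \<and> b\<noteq>r) \<or> (a,b)=(i,r)) \<longleftrightarrow> ((a\<noteq>j \<and> b\<noteq>s) \<or> (a,b)=(j,s)))"
      proof (intro allI impI)
        fix a b assume ab: "(a,b)\<in>C"
        have "(a,b) \<in> closed_nbhd n m x \<longleftrightarrow> (a,b) \<in> closed_nbhd n m y" using E ab by blast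
        then show "((a\<noteq>i \<and> b\<noteq>r) \<or> (a,b)=(i,r)) \<longleftrightarrow> ((a\<noteq>j \<and> b\<noteq>s) \<or> (a,b)=(j,s))"
          using nb[OF ab] unfolding x y adj_def by auto
      qed
      have "(i,r)=(j,s)"
        by (rule key[OF rows cols iso uniq eq]) (use xv yv x y in \<open>auto simp: verts_def\<close>)
      then show False using ne x y by simp
    qed
  qed
qed

end
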